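(* Fix real $C_1,C_2$ with $2C_1+C_2>0$ and fix $C_3\in(0,C_{3,crit})$. Then the period function $b\mapsto\mathfrak L(C_1,C_2,C_3,b)$ is strictly increasing on $(b_-(C_3),b_+(C_3))$.
   Context: Let $\alpha>0$ and real constants $C_1,C_2$ be given. Travelling wave profiles $\phi$ of the DGH equation satisfy, for real constants $b$ and $C_3$, (E1) $\alpha^2(\phi-C_1)\phi''+\frac12\alpha^2(\phi')^2+(C_1-C_2-\frac32\phi)\phi=b$, and the first integral (E2) $\alpha^2(\phi-C_1)(\phi')^2+(C_1-C_2)\phi^2-\phi^3-2b\phi+C_1(2b+C_1C_2)=C_3$. Let $C_{3,crit}=\frac1{27}(2C_1+C_2)^3$. For $C_3\in(0,C_{3,crit})$, let $\phi_1<\phi_2<\phi_3$ be the roots of $2(\phi-C_1)^2(\phi+\frac{C_2}2)=C_3$; they satisfy $-\frac{C_2}{2}<\phi_1<\frac{C_1-C_2}{3}<\phi_2<C_1<\phi_3$. Let $U(\phi)=-\frac12\phi^2-\frac12C_2\phi-\frac12C_1C_2-\frac{C_3}{2(\phi-C_1)}$, so that with $z=\xi/\alpha$ (E2) reads $b=\frac12(d\phi/dz)^2+U(\phi)$. Set $b_-(C_3)=U(\phi_2)$ and $b_+(C_3)=U(\phi_1)$. For $b\in(b_-(C_3),b_+(C_3))$, let $\phi_-<\phi_+$ be the two solutions of $U(\phi)=b$ with $\phi_1<\phi_-<\phi_2<\phi_+<C_1$. The period function (the $z$-period of the corresponding periodic orbit) is $$\mathfrak L(C_1,C_2,C_3,b)=2\int_{\phi_-}^{\phi_+}\frac{d\phi}{\sqrt{2(b-U(\phi))}}.$$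 *)

theory Defs
  imports "HOL-Analysis.Analysis"
begin

definition C3crit :: "real \<Rightarrow> real \<Rightarrow> real" where
  "C3crit C1 C2 = (2*C1 + C2)^3 / 27"

definition Upot :: "real \<Rightarrow> real \<Rightarrow> real \<Rightarrow> real \<Rightarrow> real" where
  "Upot C1 C2 C3 p = -(p^2)/2 - C2*p/2 - C1*C2/2 - C3 / (2*(p - C1))"

definition cubic :: "real \<Rightarrow> real \<Rightarrow> real \<Rightarrow> real" where
  "cubic C1 C2 p = 2*(p - C1)^2 * (p + C2/2)"

definition phi1 :: "real \<Rightarrow> real \<Rightarrow> real \<Rightarrow> real" where
  "phi1 C1 C2 C3 = (THE p. -C2/2 < p \<and> p < (C1-C2)/3 \<and> cubic C1 C2 p = C3)"

definition phi2 :: "real \<Rightarrow> real \<Rightarrow> real \<Rightarrow> real" where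
  "phi2 C1 C2 C3 = (THE p. (C1-C2)/3 < p \<and> p < C1 \<and> cubic C1 C2 p = C3)"

definition bminus :: "real \<Rightarrow> real \<Rightarrow> real \<Rightarrow> real" where
  "bminus C1 C2 C3 = Upot C1 C2 C3 (phi2 C1 C2 C3)"

definition bplus :: "real \<Rightarrow> real \<Rightarrow> real \<Rightarrow> real" where
  "bplus C1 C2 C3 = Upot C1 C2 C3 (phi1 C1 C2 C3)"

definition phiminus :: "real \<Rightarrow> real \<Rightarrow> real \<Rightarrow> real \<Rightarrow> real" where
  "phiminus C1 C2 C3 b = (THE p. phi1 C1 C2 C3 < p \<and> p < phi2 C1 C2 C3 \<and> Upot C1 C2 C3 p = b)"

definition phiplus :: "real \<Rightarrow> real \<Rightarrow> real \<Rightarrow> real \<Rightarrow> real" where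
  "phiplus C1 C2 C3 b = (THE p. phi2 C1 C2 C3 < p \<and> p < C1 \<and> Upot C1 C2 C3 p = b)"

text \<open>The integrand is nonnegative with integrable endpoint singularities; the
  (Henstock-Kurzweil) integral over the closed interval equals the improper integral.\<close>
definition period :: "real \<Rightarrow> real \<Rightarrow> real \<Rightarrow> real \<Rightarrow> real" where
  "period C1 C2 C3 b = 2 * integral {phiminus C1 C2 C3 b .. phiplus C1 C2 C3 b}
      (\<lambda>p. 1 / sqrt (2 * (b - Upot C1 C2 C3 p)))"

end

theory Submission
  imports Defs
begin


lemma key_sq:
  fixes a c d u :: real
  assumes "0<a" "a<c" "c<d" "0\<le>u" "u\<le>1"
  shows "(u*(a*(2*c-a-d)) + (1-u)*(c*(d+c-2*a))) * (a*(1-u)+c*u)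
       + ((1-u)*(a*(2*c-a-d)) + u*(c*(d+c-2*a))) * (a*u+c*(1-u)) \<ge> 0"
proof -
  have e: "(u*(a*(2*c-a-d)) + (1-u)*(c*(d+c-2*a))) * (a*(1-u)+c*u)
       + ((1-u)*(a*(2*c-a-d)) + u*(c*(d+c-2*a))) * (a*u+c*(1-u))
     = (u^2+(1-u)^2)*(a*c*(3*c-3*a)) + (2*u*(1-u))*((c-a)*((c-a)^2+a*c+d*(c+a)))"
    by (simp add: algebra_simps power2_eq_square)
  have "(u^2+(1-u)^2)*(a*c*(3*c-3*a)) \<ge> 0" using assms by (intro mult_nonneg_nonneg) auto
  moreover have "(2*u*(1-u))*((c-a)*((c-a)^2+a*c+d*(c+a))) \<ge> 0" using assms
    by (intro mult_nonneg_nonneg) auto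
  ultimately show ?thesis unfolding e by linarith
qed


lemma W_sq: assumes "0<x" "x<d" shows "(sqrt (x/(d-x))*(d-x)^2)^2 = x*(d-x)^3"
proof -
  have "(sqrt (x/(d-x)))^2 = x/(d-x)" using assms by simp
  hence "(sqrt (x/(d-x))*(d-x)^2)^2 = x/(d-x)*(d-x)^4" by (simp add: power_mult_distrib)
  also have "\<dots> = x*(d-x)^3" using assms by (simp add: field_simps power_eq_if)
  finally show ?thesis .
qed

lemma W_pos: assumes "0<x" "x<d" shows "sqrt (x/(d-x))*(d-x)^2 > 0"
  using assms by simp

lemma key_half:
  fixes a c d u :: real
  defines "P \<equiv> a*(2*c-a-d)" and "Q \<equiv> c*(d+c-2*a)"
  assumes "0<a" "a<c" "c<d" "0\<le>u" "u\<le>1/2"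
  shows "((1-u)*P+u*Q) / (sqrt ((a*(1-u)+c*u)/(d-(a*(1-u)+c*u)))*(d-(a*(1-u)+c*u))^2)
       + (u*P+(1-u)*Q) / (sqrt ((a*u+c*(1-u))/(d-(a*u+c*(1-u))))*(d-(a*u+c*(1-u)))^2) > 0"
proof -
  define x where "x = a*(1-u)+c*u"
  define y where "y = a*u+c*(1-u)"
  define \<alpha> where "\<alpha> = (1-u)*P+u*Q"
  define \<beta> where "\<beta> = u*P+(1-u)*Q"
  define Wx where "Wx = sqrt (x/(d-x))*(d-x)^2"
  define Wy where "Wy = sqrt (y/(d-y))*(d-y)^2"
  have xe: "x = a + (c-a)*u" unfolding x_def by (simp add: algebra_simps)
  have ye: "y = c - (c-a)*u" unfolding y_def by (simp add: algebra_simps)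
  have cu: "0 \<le> (c-a)*u" "(c-a)*u \<le> (c-a)" using assms
    by (simp_all add: mult_left_le)
  have x0: "0<x" "x<d" using assms cu unfolding xe by linarith+
  have y0: "0<y" "y<d" using assms cu unfolding ye by linarith+
  have Wx: "Wx > 0" "Wx^2 = x*(d-x)^3" using W_pos W_sq x0 unfolding Wx_def by auto
  have Wy: "Wy > 0" "Wy^2 = y*(d-y)^3" using W_pos W_sq y0 unfolding Wy_def by auto
  have sum: "\<alpha>+\<beta> > 0"
  proof -
    have "\<alpha>+\<beta> = (c-a)*(c+a+d)" unfolding \<alpha>_def \<beta>_def P_def Q_def by (simp add: algebra_simps)
    thus ?thesis using assms by simp
  qed
  have QP: "Q - P > 0"
  proof -
    have "Q - P = (2*c-a)*(c-a) + (d-c)*(c+a)" unfolding P_def Q_def by (simp add: algebra_simps)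
    thus ?thesis using assms by (smt (verit) mult_pos_pos)
  qed
  have ba: "\<beta> - \<alpha> = (1-2*u)*(Q-P)" unfolding \<alpha>_def \<beta>_def by (simp add: algebra_simps)
  have "(1-2*u)*(Q-P) \<ge> 0" using QP assms by (intro mult_nonneg_nonneg) auto
  hence "\<beta> \<ge> \<alpha>" using ba by linarith
  hence bpos: "\<beta> > 0" using sum by linarith
  have ks: "\<beta>*x + \<alpha>*y \<ge> 0" using key_sq[of a c d u] assms
    unfolding \<alpha>_def \<beta>_def x_def y_def P_def Q_def by (simp add: algebra_simps)
  show ?thesis
  proof (cases "\<alpha> \<ge> 0")
    case True
    have "\<alpha>/Wx \<ge> 0" using True Wx by simp
    moreover have "\<beta>/Wy > 0" using bpos Wy by simp
    ultimately show ?thesis unfolding \<alpha>_def \<beta>_def x_def y_def Wx_def Wy_def by linarith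
  next
    case False
    hence an: "\<alpha> < 0" by simp
    have ult: "u < 1/2"
    proof (rule ccontr)
      assume "\<not> u < 1/2" hence "u = 1/2" using assms by simp
      hence "1-2*u = 0" by simp
      hence "\<alpha> = \<beta>" using ba by simp
      thus False using an bpos by simp
    qed
    have "(c-a)*u < (c-a)*(1/2)" using ult assms by (intro mult_strict_left_mono) auto
    hence "2*((c-a)*u) < c-a" by simp
    hence xy': "x < y" unfolding xe ye by linarith
    have "\<beta>^2*x \<ge> \<alpha>^2*y"
    proof -
      have "\<beta>*x \<ge> (-\<alpha>)*y" using ks by simp
      hence "\<beta>*(\<beta>*x) \<ge> \<beta>*((-\<alpha>)*y)" using bpos by (intro mult_left_mono) auto
      moreover have "\<beta>*((-\<alpha>)*y) \<ge> (-\<alpha>)*((-\<alpha>)*y)"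
        using sum an y0 by (intro mult_right_mono) (auto simp: mult_nonpos_nonneg)
      ultimately show ?thesis by (simp add: power2_eq_square algebra_simps)
    qed
    hence "\<alpha>^2*y*(d-y)^3 \<le> \<beta>^2*x*(d-y)^3" using y0 by (intro mult_right_mono) auto
    also have "\<dots> < \<beta>^2*x*(d-x)^3"
    proof (rule mult_strict_left_mono)
      show "(d-y)^3 < (d-x)^3" using y0 xy' by (intro power_strict_mono) auto
      show "0 < \<beta>^2*x" using bpos x0 by simp
    qed
    finally have lt: "\<alpha>^2*y*(d-y)^3 < \<beta>^2*x*(d-x)^3" .
    have e1: "(-\<alpha>*Wy)^2 = \<alpha>^2*y*(d-y)^3" using Wy(2) by (simp add: power_mult_distrib)
    have e2: "(\<beta>*Wx)^2 = \<beta>^2*x*(d-x)^3" using Wx(2) by (simp add: power_mult_distrib)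
    have "(-\<alpha>*Wy)^2 < (\<beta>*Wx)^2" using lt e1 e2 by simp
    hence lt2: "-\<alpha>*Wy < \<beta>*Wx"
      by (rule power_less_imp_less_base) (use bpos Wx in simp)
    have "-\<alpha>/Wx = (-\<alpha>*Wy)/(Wx*Wy)" using Wy by simp
    also have "\<dots> < (\<beta>*Wx)/(Wx*Wy)" using lt2 Wx Wy by (intro divide_strict_right_mono) auto
    also have "\<dots> = \<beta>/Wy" using Wx by simp
    finally have "\<alpha>/Wx + \<beta>/Wy > 0" by simp
    thus ?thesis unfolding \<alpha>_def \<beta>_def x_def y_def Wx_def Wy_def .
  qed
qed


lemma key_all:
  fixes a c d u :: real
  defines "P \<equiv> a*(2*c-a-d)" and "Q \<equiv> c*(d+c-2*a)"
  assumes "0<a" "a<c" "c<d" "0\<le>u" "u\<le>1"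
  shows "((1-u)*P+u*Q) / (sqrt ((a*(1-u)+c*u)/(d-(a*(1-u)+c*u)))*(d-(a*(1-u)+c*u))^2)
       + (u*P+(1-u)*Q) / (sqrt ((a*u+c*(1-u))/(d-(a*u+c*(1-u))))*(d-(a*u+c*(1-u)))^2) > 0"
proof (cases "u \<le> 1/2")
  case True thus ?thesis using key_half[of a c d u] assms unfolding P_def Q_def by auto
next
  case False
  have "((1-(1-u))*P+(1-u)*Q) / (sqrt ((a*(1-(1-u))+c*(1-u))/(d-(a*(1-(1-u))+c*(1-u))))*(d-(a*(1-(1-u))+c*(1-u)))^2)
       + ((1-u)*P+(1-(1-u))*Q) / (sqrt ((a*(1-u)+c*(1-(1-u)))/(d-(a*(1-u)+c*(1-(1-u)))))*(d-(a*(1-u)+c*(1-(1-u))))^2) > 0"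
    using key_half[of a c d "1-u"] assms False unfolding P_def Q_def by auto
  thus ?thesis by (simp add: add.commute)
qed

lemma deriv_h:
  fixes A D :: "real \<Rightarrow> real"
  assumes dA: "(A has_real_derivative A') (at x)" and dD: "(D has_real_derivative D') (at x)"
    and pos: "0 < A x" "A x < D x"
  shows "((\<lambda>x. sqrt (A x/(D x - A x))) has_real_derivative
     (A' * D x - A x * D') / (2 * (sqrt (A x/(D x - A x)) * (D x - A x)^2))) (at x)"
proof -
  have dq: "((\<lambda>x. A x/(D x - A x)) has_real_derivative
      (A' * (D x - A x) - A x * (D' - A')) / ((D x - A x) * (D x - A x))) (at x)"
    using pos by (intro DERIV_divide dA DERIV_diff dD) auto
  have qpos: "A x/(D x - A x) > 0" using pos by simp
  have ds: "DERIV sqrt (A x/(D x - A x)) :> inverse (sqrt (A x/(D x - A x))) / 2"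
    using qpos by (rule DERIV_real_sqrt)
  have "((\<lambda>x. sqrt (A x/(D x - A x))) has_real_derivative
      inverse (sqrt (A x/(D x - A x))) / 2 * ((A' * (D x - A x) - A x * (D' - A')) / ((D x - A x) * (D x - A x)))) (at x)"
    by (rule DERIV_chain2[OF ds dq])
  moreover have "inverse (sqrt (A x/(D x - A x))) / 2 * ((A' * (D x - A x) - A x * (D' - A')) / ((D x - A x) * (D x - A x)))
      = (A' * D x - A x * D') / (2 * (sqrt (A x/(D x - A x)) * (D x - A x)^2))"
    using pos qpos by (simp add: field_simps power2_eq_square)
  ultimately show ?thesis by simp
qed

definition aa :: "real \<Rightarrow> real \<Rightarrow> real \<Rightarrow> real" where
  "aa S k c = ((S-c) - sqrt ((S-c)^2 - 4*k/c))/2"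
definition dd :: "real \<Rightarrow> real \<Rightarrow> real \<Rightarrow> real" where
  "dd S k c = ((S-c) + sqrt ((S-c)^2 - 4*k/c))/2"

lemma valid:
  assumes "0<k" "0<c" "k < c^2*(S-2*c)"
  shows "0 < aa S k c" "aa S k c < c" "c < dd S k c" "(S-c)^2 - 4*k/c > 0"
    "dd S k c - aa S k c = sqrt ((S-c)^2 - 4*k/c)"
    "aa S k c + dd S k c = S - c" "aa S k c * dd S k c = k/c"
proof -
  define \<Delta> where "\<Delta> = (S-c)^2 - 4*k/c"
  have Sc: "S - 2*c > 0"
  proof (rule ccontr)
    assume "\<not> S - 2*c > 0"
    hence "c^2*(S-2*c) \<le> 0" by (intro mult_nonneg_nonpos) auto
    thus False using assms by linarith
  qed
  have "c^2*(S-2*c) - k > 0" using assms by simp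
  have kc: "k/c > 0" using assms by simp
  have D1: "\<Delta> > (S - 3*c)^2"
  proof -
    have "\<Delta> - (S-3*c)^2 = 4*(c^2*(S-2*c) - k)/c" unfolding \<Delta>_def using assms
      by (simp add: field_simps power2_eq_square)
    moreover have "4*(c^2*(S-2*c) - k)/c > 0" using assms by simp
    ultimately show ?thesis by linarith
  qed
  hence Dpos: "\<Delta> > 0" using zero_le_power2[of "S-3*c"] by linarith
  have "sqrt ((S-3*c)^2) < sqrt \<Delta>" by (rule real_sqrt_less_mono[OF D1])
  hence r: "sqrt \<Delta> > \<bar>S - 3*c\<bar>" by simp
  have r2: "(sqrt \<Delta>)^2 = \<Delta>" using Dpos by simp
  have "sqrt \<Delta> < S - c"
  proof -
    have "\<Delta> < (S-c)^2" unfolding \<Delta>_def using kc by simp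
    hence "sqrt \<Delta> < sqrt ((S-c)^2)" by (rule real_sqrt_less_mono)
    thus ?thesis using Sc assms by simp
  qed
  thus "0 < aa S k c" unfolding aa_def \<Delta>_def[symmetric] by simp
  show "aa S k c < c" unfolding aa_def \<Delta>_def[symmetric] using r by simp
  show "c < dd S k c" unfolding dd_def \<Delta>_def[symmetric] using r by simp
  show "(S-c)^2 - 4*k/c > 0" using Dpos unfolding \<Delta>_def .
  show "dd S k c - aa S k c = sqrt ((S-c)^2 - 4*k/c)" unfolding aa_def dd_def by (simp add: field_simps)
  show "aa S k c + dd S k c = S - c" unfolding aa_def dd_def by (simp add: field_simps)
  show "aa S k c * dd S k c = k/c" unfolding aa_def dd_def \<Delta>_def[symmetric]
  proof -
    have "((S-c) - sqrt \<Delta>)/2 * (((S-c) + sqrt \<Delta>)/2) = ((S-c)^2 - (sqrt \<Delta>)^2)/4"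
      by (simp add: algebra_simps power2_eq_square)
    also have "\<dots> = k/c" by (simp only: r2) (simp add: \<Delta>_def)
    finally show "((S-c) - sqrt \<Delta>)/2 * (((S-c) + sqrt \<Delta>)/2) = k/c" .
  qed
qed


lemma aa_deriv:
  assumes "0<k" "0<c" "k < c^2*(S-2*c)"
  shows "((aa S k) has_real_derivative (aa S k c * (c - dd S k c) / (c * (dd S k c - aa S k c)))) (at c)"
proof -
  define \<Delta> where "\<Delta> = (S-c)^2 - 4*k/c"
  note v = valid[OF assms]
  have Dp: "\<Delta> > 0" using v(4) unfolding \<Delta>_def .
  have dD: "((\<lambda>c. (S-c)^2 - 4*k/c) has_real_derivative (-2*(S-c) + 4*k/c^2)) (at c)"
    using assms by (auto intro!: derivative_eq_intros simp: power2_eq_square field_simps)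
  have ds: "DERIV sqrt ((S-c)^2 - 4*k/c) :> inverse (sqrt \<Delta>) / 2"
    using Dp unfolding \<Delta>_def by (rule DERIV_real_sqrt)
  have dsq: "((\<lambda>c. sqrt ((S-c)^2 - 4*k/c)) has_real_derivative inverse (sqrt \<Delta>) / 2 * (-2*(S-c) + 4*k/c^2)) (at c)"
    by (rule DERIV_chain2[OF ds dD])
  have da: "((\<lambda>c. ((S-c) - sqrt ((S-c)^2 - 4*k/c))/2) has_real_derivative
      (-1 - inverse (sqrt \<Delta>) / 2 * (-2*(S-c) + 4*k/c^2))/2) (at c)"
  proof -
    have d1: "((\<lambda>c. S - c) has_real_derivative (0 - 1)) (at c)" by (intro DERIV_diff DERIV_const DERIV_ident)
    have d2: "((\<lambda>c. (S-c) - sqrt ((S-c)^2 - 4*k/c)) has_real_derivative ((0-1) - inverse (sqrt \<Delta>) / 2 * (-2*(S-c) + 4*k/c^2))) (at c)"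
      by (rule DERIV_diff[OF d1 dsq])
    have d3: "((\<lambda>c. ((S-c) - sqrt ((S-c)^2 - 4*k/c))/2) has_real_derivative ((0-1) - inverse (sqrt \<Delta>) / 2 * (-2*(S-c) + 4*k/c^2))/2) (at c)"
      by (rule DERIV_cdivide[OF d2])
    thus ?thesis by simp
  qed
  have aae: "aa S k = (\<lambda>c. ((S-c) - sqrt ((S-c)^2 - 4*k/c))/2)" unfolding aa_def by auto
  define r where "r = sqrt \<Delta>"
  have r0: "r > 0" using Dp unfolding r_def by simp
  have r2: "r^2 = (S-c)^2 - 4*k/c" unfolding r_def \<Delta>_def using Dp \<Delta>_def by simp
  have ae: "aa S k c = ((S-c) - r)/2" unfolding aa_def r_def \<Delta>_def ..
  have de: "dd S k c = ((S-c) + r)/2" unfolding dd_def r_def \<Delta>_def ..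
  have "(-1 - inverse r / 2 * (-2*(S-c) + 4*k/c^2))/2 = ((S-c) - r - 2*k/c^2)/(2*r)"
    using r0 by (simp add: field_simps)
  also have "\<dots> = ((S-c) - r)/2 * (c - ((S-c) + r)/2) / (c * r)"
  proof -
    have "(S-c-r)*(3*c-S-r) = 2*c*(S-c) - 2*c*r - 4*k/c"
    proof -
      have "(S-c-r)*(3*c-S-r) = (S-c)*(3*c-S) - 2*c*r + r^2" by (simp add: algebra_simps power2_eq_square)
      also have "\<dots> = 2*c*(S-c) - 2*c*r - 4*k/c" unfolding r2 by (simp add: algebra_simps power2_eq_square)
      finally show ?thesis .
    qed
    moreover have "((S-c) - r)/2 * (c - ((S-c) + r)/2) = (S-c-r)*(3*c-S-r)/4"
      by (simp add: field_simps)
    ultimately have "((S-c) - r)/2 * (c - ((S-c) + r)/2) = (2*c*(S-c) - 2*c*r - 4*k/c)/4"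
      by simp
    hence "((S-c) - r)/2 * (c - ((S-c) + r)/2) / (c*r) = ((2*c*(S-c) - 2*c*r - 4*k/c)/4)/(c*r)" by (rule arg_cong)
    also have "\<dots> = ((S-c) - r - 2*k/c^2)/(2*r)" using r0 assms by (simp add: field_simps power2_eq_square)
    finally show ?thesis by simp
  qed
  also have "\<dots> = aa S k c * (c - dd S k c) / (c * (dd S k c - aa S k c))"
    unfolding ae de by (simp add: field_simps)
  finally have eq: "(-1 - inverse (sqrt \<Delta>) / 2 * (-2*(S-c) + 4*k/c^2))/2
     = aa S k c * (c - dd S k c) / (c * (dd S k c - aa S k c))" unfolding r_def .
  have "(aa S k has_real_derivative (-1 - inverse (sqrt \<Delta>) / 2 * (-2*(S-c) + 4*k/c^2))/2) (at c)"
    using da aae by simp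
  thus ?thesis using eq by simp
qed

lemma dd_deriv:
  assumes "0<k" "0<c" "k < c^2*(S-2*c)"
  shows "((dd S k) has_real_derivative (dd S k c * (aa S k c - c) / (c * (dd S k c - aa S k c)))) (at c)"
proof -
  note v = valid[OF assms]
  have e: "dd S k = (\<lambda>c. (S - c) - aa S k c)" unfolding aa_def dd_def by (auto simp: field_simps)
  have "((\<lambda>c. (S - c) - aa S k c) has_real_derivative
     (-1 - aa S k c * (c - dd S k c) / (c * (dd S k c - aa S k c)))) (at c)"
  proof -
    have d1: "((\<lambda>c. S - c) has_real_derivative (0 - 1)) (at c)" by (intro DERIV_diff DERIV_const DERIV_ident)
    show ?thesis using DERIV_diff[OF d1 aa_deriv[OF assms]] by simp
  qed
  moreover have "-1 - aa S k c * (c - dd S k c) / (c * (dd S k c - aa S k c))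
     = dd S k c * (aa S k c - c) / (c * (dd S k c - aa S k c))"
    using v assms by (simp add: field_simps)
  ultimately show ?thesis unfolding e by simp
qed


definition Hf :: "real \<Rightarrow> real \<Rightarrow> real \<Rightarrow> real \<Rightarrow> real" where
  "Hf S k u c = sqrt ((aa S k c*(1-u)+c*u)/(dd S k c - (aa S k c*(1-u)+c*u)))
             + sqrt ((aa S k c*u+c*(1-u))/(dd S k c - (aa S k c*u+c*(1-u))))"

lemma psi_bounds:
  fixes a c d u :: real
  assumes "0<a" "a<c" "c<d" "0\<le>u" "u\<le>1"
  shows "0 < a*(1-u)+c*u" "a*(1-u)+c*u < d"
proof -
  have e: "a*(1-u)+c*u = a + (c-a)*u" by (simp add: algebra_simps)
  have "0 \<le> (c-a)*u" "(c-a)*u \<le> (c-a)" using assms by (simp_all add: mult_left_le)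
  thus "0 < a*(1-u)+c*u" "a*(1-u)+c*u < d" unfolding e using assms by linarith+
qed

lemma H_deriv_pos:
  assumes k: "0<k" "0<c" "k < c^2*(S-2*c)" and u: "0\<le>u" "u\<le>1"
  shows "\<exists>y. DERIV (Hf S k u) c :> y \<and> y > 0"
proof -
  note v = valid[OF k]
  define a where "a = aa S k c"
  define d where "d = dd S k c"
  define a' where "a' = a * (c - d) / (c * (d - a))"
  define d' where "d' = d * (a - c) / (c * (d - a))"
  have ac: "0<a" "a<c" "c<d" using v unfolding a_def d_def by auto
  have da: "(aa S k has_real_derivative a') (at c)" using aa_deriv[OF k] unfolding a'_def a_def d_def .
  have dd': "(dd S k has_real_derivative d') (at c)" using dd_deriv[OF k] unfolding d'_def a_def d_def .
  have dA1: "((\<lambda>c. aa S k c*(1-u)+c*u) has_real_derivative (a'*(1-u) + 1*u)) (at c)"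
    by (intro DERIV_add DERIV_cmult_right da DERIV_ident)
  have dA2: "((\<lambda>c. aa S k c*u+c*(1-u)) has_real_derivative (a'*u + 1*(1-u))) (at c)"
    by (intro DERIV_add DERIV_cmult_right da DERIV_ident)
  define \<psi>1 where "\<psi>1 = a*(1-u)+c*u"
  define \<psi>2 where "\<psi>2 = a*u+c*(1-u)"
  have p1: "0 < \<psi>1" "\<psi>1 < d" unfolding \<psi>1_def using psi_bounds[OF ac u] by auto
  have p2: "0 < \<psi>2" "\<psi>2 < d" unfolding \<psi>2_def using psi_bounds[OF ac, of "1-u"] u
    by (auto simp: algebra_simps)
  define W1 where "W1 = sqrt (\<psi>1/(d-\<psi>1))*(d-\<psi>1)^2"
  define W2 where "W2 = sqrt (\<psi>2/(d-\<psi>2))*(d-\<psi>2)^2"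
  have h1: "((\<lambda>c. sqrt ((aa S k c*(1-u)+c*u)/(dd S k c - (aa S k c*(1-u)+c*u)))) has_real_derivative
      ((a'*(1-u) + 1*u) * d - \<psi>1 * d') / (2 * W1)) (at c)"
    using deriv_h[OF dA1 dd'] p1 unfolding W1_def \<psi>1_def a_def d_def by simp
  have h2: "((\<lambda>c. sqrt ((aa S k c*u+c*(1-u))/(dd S k c - (aa S k c*u+c*(1-u))))) has_real_derivative
      ((a'*u + 1*(1-u)) * d - \<psi>2 * d') / (2 * W2)) (at c)"
    using deriv_h[OF dA2 dd'] p2 unfolding W2_def \<psi>2_def a_def d_def by simp
  have nz: "c \<noteq> 0" "d - a \<noteq> 0" using ac by auto
  define P where "P = a*(2*c-a-d)"
  define Q where "Q = c*(d+c-2*a)"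
  define m where "m = c*(d-a)"
  have m0: "m \<noteq> 0" unfolding m_def using nz by simp
  have a'm: "a' = a*(c-d)/m" unfolding a'_def m_def ..
  have d'm: "d' = d*(a-c)/m" unfolding d'_def m_def ..
  have n1: "(a'*(1-u) + 1*u) * d - \<psi>1 * d' = d*((1-u)*P+u*Q)/m"
  proof -
    have "(a'*(1-u) + 1*u) * d - \<psi>1 * d' = (a*(c-d)*(1-u)*d + u*d*m - \<psi>1*(d*(a-c)))/m"
      unfolding a'm d'm using m0 by (simp add: field_simps)
    also have "a*(c-d)*(1-u)*d + u*d*m - \<psi>1*(d*(a-c)) = d*((1-u)*P+u*Q)"
      unfolding m_def \<psi>1_def P_def Q_def by (simp add: algebra_simps)
    finally show ?thesis .
  qed
  have n2: "(a'*u + 1*(1-u)) * d - \<psi>2 * d' = d*(u*P+(1-u)*Q)/m"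
  proof -
    have "(a'*u + 1*(1-u)) * d - \<psi>2 * d' = (a*(c-d)*u*d + (1-u)*d*m - \<psi>2*(d*(a-c)))/m"
      unfolding a'm d'm using m0 by (simp add: field_simps)
    also have "a*(c-d)*u*d + (1-u)*d*m - \<psi>2*(d*(a-c)) = d*(u*P+(1-u)*Q)"
      unfolding m_def \<psi>2_def P_def Q_def by (simp add: algebra_simps)
    finally show ?thesis .
  qed
  have K: "((1-u)*P+u*Q)/W1 + (u*P+(1-u)*Q)/W2 > 0"
    using key_all[OF ac u] unfolding P_def Q_def W1_def W2_def \<psi>1_def \<psi>2_def .
  define y where "y = ((a'*(1-u) + 1*u) * d - \<psi>1 * d') / (2 * W1) + ((a'*u + 1*(1-u)) * d - \<psi>2 * d') / (2 * W2)"
  have "y = d/(2*m) * (((1-u)*P+u*Q)/W1 + (u*P+(1-u)*Q)/W2)"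
  proof -
    have "W1 > 0" unfolding W1_def using W_pos p1 by auto
    moreover have "W2 > 0" unfolding W2_def using W_pos p2 by auto
    ultimately show ?thesis unfolding y_def n1 n2 using m0 by (simp add: field_simps)
  qed
  moreover have "d/(2*m) > 0" using ac unfolding m_def by simp
  ultimately have "y > 0" using K by (metis mult_pos_pos)
  moreover have "DERIV (Hf S k u) c :> y"
  proof -
    have "Hf S k u = (\<lambda>c. sqrt ((aa S k c*(1-u)+c*u)/(dd S k c - (aa S k c*(1-u)+c*u)))
             + sqrt ((aa S k c*u+c*(1-u))/(dd S k c - (aa S k c*u+c*(1-u)))))"
      unfolding Hf_def by auto
    thus ?thesis unfolding y_def using DERIV_add[OF h1 h2] by simp
  qed
  ultimately show ?thesis by blast
qed

lemma H_mono:
  assumes "0<k" "0<c1" "c1<c2" "\<And>c. c1 \<le> c \<Longrightarrow> c \<le> c2 \<Longrightarrow> k < c^2*(S-2*c)"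
    "0\<le>u" "u\<le>1"
  shows "Hf S k u c1 < Hf S k u c2"
proof (rule DERIV_pos_imp_increasing[OF assms(3)])
  fix x assume "c1 \<le> x" "x \<le> c2"
  thus "\<exists>y. DERIV (Hf S k u) x :> y \<and> y > 0"
    using H_deriv_pos[of k x S u] assms by auto
qed


lemma subst_integral:
  fixes F g g' k :: "real \<Rightarrow> real"
  assumes Fm: "F \<in> borel_measurable borel" and Fnn: "\<And>p. p \<in> {g \<alpha>..g \<beta>} \<Longrightarrow> F p \<ge> 0"
  and derivg: "\<And>x. x \<in> {\<alpha>..\<beta>} \<Longrightarrow> (g has_real_derivative g' x) (at x)"
  and contg': "continuous_on {\<alpha>..\<beta>} g'" and g'nn: "\<And>x. x\<in>{\<alpha>..\<beta>} \<Longrightarrow> g' x \<ge> 0"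
  and ab: "\<alpha> \<le> \<beta>" and gab: "g \<alpha> \<le> g \<beta>"
  and kc: "continuous_on {\<alpha>..\<beta>} k" and knn: "\<And>x. x\<in>{\<alpha>..\<beta>} \<Longrightarrow> k x \<ge> 0"
  and eq: "\<And>x. \<alpha><x \<Longrightarrow> x<\<beta> \<Longrightarrow> F (g x) * g' x = k x"
  shows "(F has_integral integral {\<alpha>..\<beta>} k) {g \<alpha>..g \<beta>}"
proof -
  define I where "I = integral {\<alpha>..\<beta>} k"
  have kint: "(k has_integral I) {\<alpha>..\<beta>}" unfolding I_def
    using integrable_continuous_interval[OF kc] by (rule integrable_integral)
  have I0: "I \<ge> 0" unfolding I_def using knn by (intro integral_nonneg integrable_continuous_interval kc) auto
  have fk: "((\<lambda>x. F (g x) * g' x) has_integral I) {\<alpha>..\<beta>}"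
  proof (rule has_integral_spike_finite[OF _ _ kint])
    show "finite {\<alpha>, \<beta>}" by simp
    show "\<And>x. x \<in> {\<alpha>..\<beta>} - {\<alpha>, \<beta>} \<Longrightarrow> F (g x) * g' x = k x" using eq by auto
  qed
  have fnn: "\<And>x. x \<in> {\<alpha>..\<beta>} \<Longrightarrow> 0 \<le> F (g x) * g' x"
  proof -
    fix x assume x: "x \<in> {\<alpha>..\<beta>}"
    show "0 \<le> F (g x) * g' x"
    proof (cases "x = \<alpha> \<or> x = \<beta>")
      case True
      hence "g x \<in> {g \<alpha>..g \<beta>}" using gab by auto
      thus ?thesis using Fnn g'nn x by simp
    next
      case False
      thus ?thesis using eq[of x] knn[OF x] x by auto
    qed
  qed
  have N1: "(\<integral>\<^sup>+ x. ennreal (indicator {\<alpha>..\<beta>} x * (F (g x) * g' x)) \<partial>lborel) = ennreal I"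
    by (rule nn_integral_has_integral_lebesgue[OF fnn fk])
  have Fsm: "set_borel_measurable borel {g \<alpha>..g \<beta>} F" unfolding set_borel_measurable_def
    using Fm by measurable
  have N2: "(\<integral>\<^sup>+ x. ennreal (F x * indicator {g \<alpha>..g \<beta>} x) \<partial>lborel) =
      (\<integral>\<^sup>+ x. ennreal (F (g x) * g' x * indicator {\<alpha>..\<beta>} x) \<partial>lborel)"
    by (rule nn_integral_substitution[OF Fsm derivg contg' g'nn ab])
  have N3: "(\<integral>\<^sup>+ x. ennreal (F x * indicator {g \<alpha>..g \<beta>} x) \<partial>lborel) = ennreal I"
    using N1 N2 by (simp add: mult.commute)
  have "((\<lambda>x. F x * indicator {g \<alpha>..g \<beta>} x) has_integral I) UNIV"
  proof (rule nn_integral_has_integral[OF _ _ N3 I0])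
    show "(\<lambda>x. F x * indicator {g \<alpha>..g \<beta>} x) \<in> borel_measurable borel" using Fm by measurable
    show "\<And>x. 0 \<le> F x * indicator {g \<alpha>..g \<beta>} x" using Fnn by (auto simp: indicator_def)
  qed
  moreover have "(\<lambda>x. F x * indicator {g \<alpha>..g \<beta>} x) = (\<lambda>x. if x \<in> {g \<alpha>..g \<beta>} then F x else 0)"
    by (auto simp: indicator_def)
  ultimately show ?thesis unfolding I_def using has_integral_restrict_UNIV by metis
qed


definition fc :: "real \<Rightarrow> real \<Rightarrow> real" where "fc S x = x^2*(S-2*x)"

lemma fc_inc: assumes "0<S" "0\<le>x" "x<y" "y\<le>S/3" shows "fc S x < fc S y"
proof -
  have e: "fc S y - fc S x = (y-x)*(S*(x+y) - 2*(x^2+x*y+y^2))"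
    unfolding fc_def by (simp add: algebra_simps power2_eq_square)
  have e2: "S*(x+y) - 2*(x^2+x*y+y^2) = 2*(S*x/3 - x^2) + (S*x/3 - x*y) + (S*y/3 - x*y) + 2*(S*y/3 - y^2)"
    by (simp add: algebra_simps power2_eq_square)
  have "x*x \<le> x*(S/3)" using assms by (intro mult_left_mono) auto
  hence 1: "S*x/3 - x^2 \<ge> 0" by (simp add: power2_eq_square algebra_simps)
  have "x*y \<le> x*(S/3)" using assms by (intro mult_left_mono) auto
  hence 2: "S*x/3 - x*y \<ge> 0" by (simp add: algebra_simps)
  have "x*y < (S/3)*y" using assms by (intro mult_strict_right_mono) auto
  hence 3: "S*y/3 - x*y > 0" by (simp add: algebra_simps)
  have "y*y \<le> y*(S/3)" using assms by (intro mult_left_mono) auto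
  hence 4: "S*y/3 - y^2 \<ge> 0" by (simp add: power2_eq_square algebra_simps)
  have "S*(x+y) - 2*(x^2+x*y+y^2) > 0" unfolding e2 using 1 2 3 4 by (smt (verit))
  moreover have "y - x > 0" using assms by simp
  ultimately have "fc S y - fc S x > 0" unfolding e by simp
  thus ?thesis by simp
qed

lemma fc_dec: assumes "0<S" "S/3\<le>x" "x<y" shows "fc S x > fc S y"
proof -
  have e: "fc S x - fc S y = (y-x)*(2*(x^2+x*y+y^2) - S*(x+y))"
    unfolding fc_def by (simp add: algebra_simps power2_eq_square)
  have e2: "2*(x^2+x*y+y^2) - S*(x+y) = 2*(x^2 - S*x/3) + (x*y - S*x/3) + (x*y - S*y/3) + 2*(y^2 - S*y/3)"
    by (simp add: algebra_simps power2_eq_square)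
  have x0: "x > 0" using assms by simp
  have "x*(S/3) \<le> x*x" using assms x0 by (intro mult_left_mono) auto
  hence 1: "x^2 - S*x/3 \<ge> 0" by (simp add: power2_eq_square algebra_simps)
  have "x*(S/3) \<le> x*y" using assms x0 by (intro mult_left_mono) auto
  hence 2: "x*y - S*x/3 \<ge> 0" by (simp add: algebra_simps)
  have "(S/3)*y \<le> x*y" using assms x0 by (intro mult_right_mono) auto
  hence 3: "x*y - S*y/3 \<ge> 0" by (simp add: algebra_simps)
  have "y*(S/3) < y*y" using assms x0 by (intro mult_strict_left_mono) auto
  hence 4: "y^2 - S*y/3 > 0" by (simp add: power2_eq_square algebra_simps)
  have "2*(x^2+x*y+y^2) - S*(x+y) > 0" unfolding e2 using 1 2 3 4 by (smt (verit))
  moreover have "y - x > 0" using assms by simp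
  ultimately have "fc S x - fc S y > 0" unfolding e by simp
  thus ?thesis by simp
qed


definition Vf :: "real \<Rightarrow> real \<Rightarrow> real \<Rightarrow> real" where
  "Vf S C3 x = (S*x - x^2 + C3/x)/2"

lemma Upot_V: "Upot C1 C2 C3 p = -(C1*(C1+2*C2))/2 + Vf (2*C1+C2) C3 (C1 - p)"
proof (cases "p = C1")
  case True thus ?thesis unfolding Upot_def Vf_def by (simp add: algebra_simps power2_eq_square)
next
  case False
  hence "C1 - p \<noteq> 0" "p - C1 \<noteq> 0" by auto
  thus ?thesis unfolding Upot_def Vf_def by (simp add: field_simps power2_eq_square)
qed

lemma cubic_fc: "cubic C1 C2 p = fc (2*C1+C2) (C1 - p)"
  unfolding cubic_def fc_def by (simp add: algebra_simps power2_eq_square)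

lemma V_deriv: assumes "x > 0"
  shows "(Vf S C3 has_real_derivative (fc S x - C3)/(2*x^2)) (at x)"
proof -
  have "((\<lambda>x. (S*x - x^2 + C3/x)/2) has_real_derivative (fc S x - C3)/(2*x^2)) (at x)"
    using assms by (auto intro!: derivative_eq_intros simp: fc_def field_simps power2_eq_square)
  thus ?thesis unfolding Vf_def[abs_def] by simp
qed

lemma V_cont: assumes "0 < x" shows "continuous_on {x..y} (Vf S C3)"
proof -
  have "continuous_on {x..y} (\<lambda>x. (S*x - x^2 + C3/x)/2)"
    using assms by (intro continuous_intros) auto
  thus ?thesis unfolding Vf_def[abs_def] .
qed

lemma V_dec: assumes "0<x" "x<y" "\<And>z. x<z \<Longrightarrow> z<y \<Longrightarrow> fc S z < C3"
  shows "Vf S C3 y < Vf S C3 x"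
proof (rule DERIV_neg_imp_decreasing_open[OF assms(2) _ V_cont[OF assms(1)]])
  fix z assume z: "x<z" "z<y"
  have "(fc S z - C3)/(2*z^2) < 0" using assms(3)[OF z] z assms(1) by (simp add: divide_neg_pos)
  thus "\<exists>d. (Vf S C3 has_real_derivative d) (at z) \<and> d < 0" using V_deriv[of z S C3] z assms by auto
qed

lemma V_inc: assumes "0<x" "x<y" "\<And>z. x<z \<Longrightarrow> z<y \<Longrightarrow> fc S z > C3"
  shows "Vf S C3 x < Vf S C3 y"
proof (rule DERIV_pos_imp_increasing_open[OF assms(2) _ V_cont[OF assms(1)]])
  fix z assume z: "x<z" "z<y"
  have "(fc S z - C3)/(2*z^2) > 0" using assms(3)[OF z] z assms(1) by simp
  thus "\<exists>d. (Vf S C3 has_real_derivative d) (at z) \<and> d > 0" using V_deriv[of z S C3] z assms by auto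
qed

lemma factor:
  fixes S C3 a c \<beta> :: real
  assumes a0: "0<a" and ac: "a<c" and Va: "Vf S C3 a = \<beta>" and Vc: "Vf S C3 c = \<beta>"
  shows "a*c*(S-a-c) = C3" "S*(a+c) - (a^2+a*c+c^2) = 2*\<beta>"
    "\<And>x. 0 < x \<Longrightarrow> 2*(\<beta> - Vf S C3 x) = (x-a)*(c-x)*((S-a-c)-x)/x"
proof -
  have c0: "c > 0" using a0 ac by simp
  have Ea: "S*a^2 - a^3 + C3 = 2*\<beta>*a"
  proof -
    have "S*a - a^2 + C3/a = 2*\<beta>" using Va unfolding Vf_def by simp
    hence "(S*a - a^2 + C3/a)*a = 2*\<beta>*a" by simp
    thus ?thesis using a0 by (simp add: algebra_simps power2_eq_square power3_eq_cube)
  qed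
  have Ec: "S*c^2 - c^3 + C3 = 2*\<beta>*c"
  proof -
    have "S*c - c^2 + C3/c = 2*\<beta>" using Vc unfolding Vf_def by simp
    hence "(S*c - c^2 + C3/c)*c = 2*\<beta>*c" by simp
    thus ?thesis using c0 by (simp add: algebra_simps power2_eq_square power3_eq_cube)
  qed
  have "(a-c)*(S*(a+c) - (a^2+a*c+c^2) - 2*\<beta>) = (S*a^2 - a^3 + C3 - 2*\<beta>*a) - (S*c^2 - c^3 + C3 - 2*\<beta>*c)"
    by (simp add: algebra_simps power2_eq_square power3_eq_cube)
  also have "\<dots> = 0" using Ea Ec by simp
  finally have "(a-c)*(S*(a+c) - (a^2+a*c+c^2) - 2*\<beta>) = 0" .
  moreover have "a - c \<noteq> 0" using ac by simp
  ultimately have B: "S*(a+c) - (a^2+a*c+c^2) = 2*\<beta>" by simp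
  thus "S*(a+c) - (a^2+a*c+c^2) = 2*\<beta>" .
  have "C3 = 2*\<beta>*a - S*a^2 + a^3" using Ea by simp
  also have "\<dots> = (S*(a+c) - (a^2+a*c+c^2))*a - S*a^2 + a^3" unfolding B ..
  also have "\<dots> = a*c*(S-a-c)" by (simp add: algebra_simps power2_eq_square power3_eq_cube)
  finally show C: "a*c*(S-a-c) = C3" by simp
  fix x :: real assume x: "0 < x"
  have "2*(\<beta> - Vf S C3 x) = 2*\<beta> - S*x + x^2 - C3/x" unfolding Vf_def by (simp add: field_simps)
  also have "\<dots> = (S*(a+c) - (a^2+a*c+c^2)) - S*x + x^2 - a*c*(S-a-c)/x" unfolding B C ..
  also have "\<dots> = (x-a)*(c-x)*((S-a-c)-x)/x" using x
    by (simp add: field_simps power2_eq_square)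
  finally show "2*(\<beta> - Vf S C3 x) = (x-a)*(c-x)*((S-a-c)-x)/x" .
qed

lemma d_gt_c:
  fixes S C3 a c :: real
  assumes "0<a" "a<c" "a*c*(S-a-c) = C3" "fc S c > C3"
  shows "c < S - a - c"
proof -
  have "c^2*(S-2*c) > a*c*(S-a-c)" using assms unfolding fc_def by simp
  hence "c*(c*(S-2*c)) > c*(a*(S-a-c))" by (simp add: power2_eq_square algebra_simps)
  hence "c*(S-2*c) > a*(S-a-c)" using assms by (simp add: mult_less_cancel_left)
  moreover have "c*(S-2*c) - a*(S-a-c) = (c-a)*((S-a-c)-c)" by (simp add: algebra_simps)
  ultimately have "(c-a)*((S-a-c)-c) > 0" by simp
  thus ?thesis using assms by (simp add: zero_less_mult_iff)
qed


lemma xth_bounds: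
  fixes a c :: real assumes "a \<le> c"
  shows "a \<le> c*(cos t)^2 + a*(sin t)^2" "c*(cos t)^2 + a*(sin t)^2 \<le> c"
    "c*(cos t)^2 + a*(sin t)^2 - a = (c-a)*(cos t)^2" "c - (c*(cos t)^2 + a*(sin t)^2) = (c-a)*(sin t)^2"
proof -
  have s: "(sin t)^2 = 1 - (cos t)^2" by (simp add: sin_squared_eq)
  show e1: "c*(cos t)^2 + a*(sin t)^2 - a = (c-a)*(cos t)^2" unfolding s by (simp add: algebra_simps)
  have s2: "(cos t)^2 = 1 - (sin t)^2" by (simp add: cos_squared_eq)
  show e2: "c - (c*(cos t)^2 + a*(sin t)^2) = (c-a)*(sin t)^2" unfolding s2 by (simp add: algebra_simps)
  have "(c-a)*(cos t)^2 \<ge> 0" "(c-a)*(sin t)^2 \<ge> 0" using assms by simp_all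
  thus "a \<le> c*(cos t)^2 + a*(sin t)^2" "c*(cos t)^2 + a*(sin t)^2 \<le> c" using e1 e2 by linarith+
qed

lemma aux_cancel: "A * s * co \<noteq> 0 \<Longrightarrow> 1/(A * s * co * r)*(2 * A * s * co) = 2/(r::real)"
  by (cases "r = 0") (simp_all add: field_simps)

lemma period_subst:
  fixes C1 a c d :: real and F :: "real \<Rightarrow> real"
  assumes a0: "0<a" and ac: "a<c" and cd: "c<d" and Fm: "F \<in> borel_measurable borel"
   and FR: "\<And>p. C1 - c \<le> p \<Longrightarrow> p \<le> C1 - a \<Longrightarrow> F p = 1/sqrt(((C1-p)-a)*(c-(C1-p))*(d-(C1-p))/(C1-p))"
  shows "(F has_integral integral {0..pi/2} (\<lambda>t. 2 * sqrt((c*(cos t)^2 + a*(sin t)^2)/(d - (c*(cos t)^2 + a*(sin t)^2))))) {C1-c..C1-a}"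
proof -
  define g where "g = (\<lambda>t. C1 - (c*(cos t)^2 + a*(sin t)^2))"
  define g' where "g' = (\<lambda>t::real. 2*(c-a)*(sin t)*(cos t))"
  define k where "k = (\<lambda>t. 2 * sqrt((c*(cos t)^2 + a*(sin t)^2)/(d - (c*(cos t)^2 + a*(sin t)^2))))"
  have g0: "g 0 = C1 - c" and g1: "g (pi/2) = C1 - a" unfolding g_def by simp_all
  have xb: "a \<le> c*(cos t)^2 + a*(sin t)^2" "c*(cos t)^2 + a*(sin t)^2 \<le> c" for t
    using xth_bounds ac by auto
  have "(F has_integral integral {0..pi/2} k) {g 0..g (pi/2)}"
  proof (rule subst_integral[where g' = g'])
    show "F \<in> borel_measurable borel" by (rule Fm)
    show "0 \<le> F p" if "p \<in> {g 0..g (pi/2)}" for p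
    proof -
      have p: "C1 - c \<le> p" "p \<le> C1 - a" using that g0 g1 by auto
      have "((C1-p)-a)*(c-(C1-p))*(d-(C1-p))/(C1-p) \<ge> 0"
        using p a0 ac cd by (intro divide_nonneg_pos mult_nonneg_nonneg) auto
      thus ?thesis using FR[OF p] by simp
    qed
    show "(g has_real_derivative g' t) (at t)" if "t \<in> {0..pi/2}" for t
      unfolding g_def g'_def
      by (auto intro!: derivative_eq_intros simp: power2_eq_square algebra_simps)
    show "continuous_on {0..pi/2} g'" unfolding g'_def by (intro continuous_intros)
    show "0 \<le> g' t" if "t \<in> {0..pi/2}" for t
      unfolding g'_def using that ac by (auto intro!: mult_nonneg_nonneg sin_ge_zero cos_ge_zero)
    show "0 \<le> pi/2" by simp
    show "g 0 \<le> g (pi/2)" unfolding g0 g1 using ac by simp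
    have nz: "d - (c*(cos t)^2 + a*(sin t)^2) \<noteq> 0" for t using xb[of t] cd by auto
    show "continuous_on {0..pi/2} k" unfolding k_def using nz by (intro continuous_intros) auto
    show "0 \<le> k t" if "t \<in> {0..pi/2}" for t unfolding k_def
      using xb[of t] cd a0 by (auto intro!: divide_nonneg_pos)
    show "F (g t) * g' t = k t" if t: "0 < t" "t < pi/2" for t
    proof -
      define x where "x = c*(cos t)^2 + a*(sin t)^2"
      define sn where "sn = sin t"
      define co where "co = cos t"
      have s0: "sn > 0" unfolding sn_def using t by (intro sin_gt_zero) auto
      have c0: "co > 0" unfolding co_def using t by (intro cos_gt_zero_pi) auto
      have x0: "x > 0" "x < d" using xb[of t] a0 cd unfolding x_def by auto
      have gx: "C1 - g t = x" unfolding g_def x_def by simp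
      have p: "C1 - c \<le> g t" "g t \<le> C1 - a" using xb[of t] unfolding g_def by auto
      have e3: "x - a = (c-a)*co^2" using xth_bounds(3)[of a c t] ac unfolding x_def co_def by simp
      have e4: "c - x = (c-a)* sn^2" using xth_bounds(4)[of a c t] ac unfolding x_def sn_def by simp
      have e5: "((c-a) * sn * co)^2 = ((c-a)*co^2)*((c-a)* sn^2)" by (simp add: power2_eq_square algebra_simps)
      have R: "(x-a)*(c-x)*(d-x)/x = ((c-a) * sn * co)^2 * ((d-x)/x)"
        unfolding e3 e4 e5 by simp
      have pos: "(c-a)* sn * co > 0" using ac s0 c0 by simp
      have sq: "sqrt ((x-a)*(c-x)*(d-x)/x) = (c-a)* sn * co * sqrt ((d-x)/x)"
        unfolding R real_sqrt_mult using pos by simp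
      have dx: "sqrt ((d-x)/x) > 0" using x0 by simp
      have "F (g t) * g' t = 1/((c-a)* sn * co * sqrt ((d-x)/x)) * (2*(c-a)* sn * co)"
        unfolding FR[OF p] gx sq g'_def sn_def co_def ..
      also have "\<dots> = 2 / sqrt ((d-x)/x)" using ac s0 c0 by (intro aux_cancel) simp
      also have "\<dots> = 2 * sqrt (x/(d-x))" using x0 by (simp add: real_sqrt_divide field_simps)
      finally show ?thesis unfolding k_def x_def .
    qed
  qed
  thus ?thesis unfolding g0 g1 k_def .
qed


lemma reflect_int:
  fixes k :: "real \<Rightarrow> real"
  assumes "continuous_on {0..pi/2} k"
  shows "integral {0..pi/2} (\<lambda>t. k (pi/2 - t)) = integral {0..pi/2} k"
proof -
  have "(k has_integral integral {0..pi/2} k) {0..pi/2}"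
    using integrable_continuous_interval[OF assms] by (rule integrable_integral)
  hence "((\<lambda>x. k (-x)) has_integral integral {0..pi/2} k) {-(pi/2)..-0}"
    by (subst has_integral_reflect_real)
  hence "(((\<lambda>x. k (-x)) \<circ> ((+) (-(pi/2)))) has_integral integral {0..pi/2} k) {0..pi/2}"
    by (subst has_integral_shift_Icc_real) simp
  hence "((\<lambda>t. k (pi/2 - t)) has_integral integral {0..pi/2} k) {0..pi/2}"
    by (simp add: o_def)
  thus ?thesis by (rule integral_unique)
qed

lemma aa_id:
  fixes a c d k :: real
  assumes "0<a" "a<c" "c<d" "a*c*d = k"
  shows "aa (a+c+d) k c = a" "dd (a+c+d) k c = d"
proof -
  have "((a+c+d)-c)^2 - 4*k/c = (d-a)^2" using assms
    by (simp add: field_simps power2_eq_square)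
  hence r: "sqrt (((a+c+d)-c)^2 - 4*k/c) = d - a" using assms by simp
  show "aa (a+c+d) k c = a" unfolding aa_def r by simp
  show "dd (a+c+d) k c = d" unfolding dd_def r by simp
qed


context
  fixes C1 C2 C3 :: real
  assumes S0: "2*C1+C2 > 0" and C30: "0 < C3" and C3c: "C3 < C3crit C1 C2"
begin

abbreviation "SS \<equiv> 2*C1+C2"

lemma fc_third: "fc SS (SS/3) > C3"
  using C3c unfolding fc_def C3crit_def by (simp add: field_simps power2_eq_square power3_eq_cube)

lemma fc_cont: "continuous_on A (fc S)"
  unfolding fc_def[abs_def] by (intro continuous_intros)

lemma root2_ex: "\<exists>!x. 0 < x \<and> x < SS/3 \<and> fc SS x = C3"
proof -
  obtain x where x: "0 \<le> x" "x \<le> SS/3" "fc SS x = C3"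
    using IVT'[of "fc SS" 0 C3 "SS/3"] fc_third C30 S0 fc_cont by (auto simp: fc_def)
  have "x \<noteq> 0" using x C30 by (auto simp: fc_def)
  moreover have "x \<noteq> SS/3"
  proof
    assume h: "x = SS/3" have "fc SS x > C3" using fc_third unfolding h .
    thus False using x by simp
  qed
  ultimately have ex: "0 < x \<and> x < SS/3 \<and> fc SS x = C3" using x by auto
  show ?thesis
  proof (rule ex1I[of _ x])
    show "0 < x \<and> x < SS/3 \<and> fc SS x = C3" by (rule ex)
    fix y assume y: "0 < y \<and> y < SS/3 \<and> fc SS y = C3"
    show "y = x"
    proof (rule ccontr)
      assume "y \<noteq> x"
      hence "y < x \<or> x < y" by auto
      thus False
      proof
        assume "y < x" hence "fc SS y < fc SS x" using fc_inc[of SS y x] ex y S0 by simp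
        thus False using x y by simp
      next
        assume "x < y" hence "fc SS x < fc SS y" using fc_inc[of SS x y] ex y S0 by simp
        thus False using x y by simp
      qed
    qed
  qed
qed

lemma root1_ex: "\<exists>!x. SS/3 < x \<and> x < SS/2 \<and> fc SS x = C3"
proof -
  have h: "fc SS (SS/2) = 0" unfolding fc_def by (simp add: algebra_simps)
  obtain x where x: "SS/3 \<le> x" "x \<le> SS/2" "fc SS x = C3"
    using IVT2'[of "fc SS" "SS/2" C3 "SS/3"] fc_third C30 S0 fc_cont h by auto
  have "x \<noteq> SS/2"
  proof
    assume h2: "x = SS/2" have "fc SS x = 0" using h unfolding h2 .
    thus False using x C30 by simp
  qed
  moreover have "x \<noteq> SS/3"
  proof
    assume h: "x = SS/3" have "fc SS x > C3" using fc_third unfolding h .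
    thus False using x by simp
  qed
  ultimately have ex: "SS/3 < x \<and> x < SS/2 \<and> fc SS x = C3" using x by auto
  show ?thesis
  proof (rule ex1I[of _ x])
    show "SS/3 < x \<and> x < SS/2 \<and> fc SS x = C3" by (rule ex)
    fix y assume y: "SS/3 < y \<and> y < SS/2 \<and> fc SS y = C3"
    show "y = x"
    proof (rule ccontr)
      assume "y \<noteq> x"
      hence "y < x \<or> x < y" by auto
      thus False
      proof
        assume "y < x" hence "fc SS y > fc SS x" using fc_dec[of SS y x] ex y S0 by simp
        thus False using x y by simp
      next
        assume "x < y" hence "fc SS x > fc SS y" using fc_dec[of SS x y] ex y S0 by simp
        thus False using x y by simp
      qed
    qed
  qed
qed

definition "x2 = C1 - phi2 C1 C2 C3"
definition "x1 = C1 - phi1 C1 C2 C3"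

lemma SS3: "SS/3 = C1 - (C1-C2)/3" by (simp add: field_simps)
lemma SS2: "SS/2 = C1 - (-C2/2)" by (simp add: field_simps)

lemma x2_prop: "0 < x2" "x2 < SS/3" "fc SS x2 = C3"
proof -
  obtain x where x: "0 < x" "x < SS/3" "fc SS x = C3"
    and uniq: "\<And>y. 0 < y \<and> y < SS/3 \<and> fc SS y = C3 \<Longrightarrow> y = x"
    using root2_ex by blast
  have "phi2 C1 C2 C3 = C1 - x" unfolding phi2_def
  proof (rule the_equality)
    have "(C1-C2)/3 < C1 - x" using x(2) unfolding SS3 by linarith
    moreover have "cubic C1 C2 (C1 - x) = C3" using x(3) unfolding cubic_fc by simp
    ultimately show "(C1-C2)/3 < C1 - x \<and> C1 - x < C1 \<and> cubic C1 C2 (C1 - x) = C3" using x(1) by simp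
  next
    fix p assume p: "(C1-C2)/3 < p \<and> p < C1 \<and> cubic C1 C2 p = C3"
    have "C1 - p < SS/3" using p unfolding SS3 by linarith
    moreover have "fc SS (C1 - p) = C3" using p unfolding cubic_fc by simp
    ultimately have "C1 - p = x" using uniq p by simp
    thus "p = C1 - x" by simp
  qed
  hence "x2 = x" unfolding x2_def by simp
  thus "0 < x2" "x2 < SS/3" "fc SS x2 = C3" using x by auto
qed

lemma x1_prop: "SS/3 < x1" "x1 < SS/2" "fc SS x1 = C3"
proof -
  obtain x where x: "SS/3 < x" "x < SS/2" "fc SS x = C3"
    and uniq: "\<And>y. SS/3 < y \<and> y < SS/2 \<and> fc SS y = C3 \<Longrightarrow> y = x"
    using root1_ex by blast
  have "phi1 C1 C2 C3 = C1 - x" unfolding phi1_def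
  proof (rule the_equality)
    have "C1 - x < (C1-C2)/3" using x(1) unfolding SS3 by linarith
    moreover have "-C2/2 < C1 - x" using x(2) unfolding SS2 by linarith
    moreover have "cubic C1 C2 (C1 - x) = C3" using x(3) unfolding cubic_fc by simp
    ultimately show "-C2/2 < C1 - x \<and> C1 - x < (C1-C2)/3 \<and> cubic C1 C2 (C1 - x) = C3" by simp
  next
    fix p assume p: "-C2/2 < p \<and> p < (C1-C2)/3 \<and> cubic C1 C2 p = C3"
    have "SS/3 < C1 - p" using p unfolding SS3 by linarith
    moreover have "C1 - p < SS/2" using p unfolding SS2 by linarith
    moreover have "fc SS (C1 - p) = C3" using p unfolding cubic_fc by simp
    ultimately have "C1 - p = x" using uniq by simp
    thus "p = C1 - x" by simp
  qed
  hence "x1 = x" unfolding x1_def by simp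
  thus "SS/3 < x1" "x1 < SS/2" "fc SS x1 = C3" using x by auto
qed

lemma fc_below: "0 < x \<Longrightarrow> x < x2 \<Longrightarrow> fc SS x < C3"
  using fc_inc[of SS x x2] x2_prop S0 by auto

lemma fc_above: "x2 < x \<Longrightarrow> x < x1 \<Longrightarrow> fc SS x > C3"
proof -
  assume a: "x2 < x" "x < x1"
  show ?thesis
  proof (cases "x \<le> SS/3")
    case True thus ?thesis using fc_inc[of SS x2 x] x2_prop S0 a by auto
  next
    case False thus ?thesis using fc_dec[of SS x x1] x1_prop S0 a by auto
  qed
qed


lemma V_dec2: "0 < x \<Longrightarrow> x < y \<Longrightarrow> y \<le> x2 \<Longrightarrow> Vf SS C3 y < Vf SS C3 x"
  by (rule V_dec) (auto intro: fc_below)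

lemma V_inc2: "x2 \<le> x \<Longrightarrow> x < y \<Longrightarrow> y \<le> x1 \<Longrightarrow> Vf SS C3 x < Vf SS C3 y"
  using x2_prop by (intro V_inc) (auto intro: fc_above)

abbreviation "K0 \<equiv> -(C1*(C1+2*C2))/2"

lemma bminus_eq: "bminus C1 C2 C3 = K0 + Vf SS C3 x2"
  unfolding bminus_def Upot_V x2_def ..

lemma bplus_eq: "bplus C1 C2 C3 = K0 + Vf SS C3 x1"
  unfolding bplus_def Upot_V x1_def ..

lemma a_ex:
  assumes "Vf SS C3 x2 < \<beta>"
  shows "\<exists>!x. 0 < x \<and> x < x2 \<and> Vf SS C3 x = \<beta>"
proof -
  define x0 where "x0 = min (x2/2) (C3/(2*(\<bar>\<beta>\<bar>+1)))"
  have x0p: "0 < x0" "x0 < x2" using x2_prop C30 unfolding x0_def by auto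
  have "x0 \<le> C3/(2*(\<bar>\<beta>\<bar>+1))" unfolding x0_def by simp
  hence "x0*(2*(\<bar>\<beta>\<bar>+1)) \<le> C3" by (simp add: field_simps)
  hence h1: "C3/x0 \<ge> 2*(\<bar>\<beta>\<bar>+1)" using x0p by (simp add: field_simps)
  have "x0 < SS" using x0p x2_prop by simp
  hence "x0*x0 < SS*x0" using x0p by (intro mult_strict_right_mono) auto
  hence "SS*x0 - x0^2 > 0" by (simp add: power2_eq_square)
  hence "SS*x0 - x0^2 + C3/x0 > 2*(\<bar>\<beta>\<bar>+1)" using h1 by linarith
  hence "(SS*x0 - x0^2 + C3/x0)/2 > \<bar>\<beta>\<bar>+1" by simp
  hence V0: "Vf SS C3 x0 > \<beta>" unfolding Vf_def using abs_ge_self[of \<beta>] by linarith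
  obtain x where x: "x0 \<le> x" "x \<le> x2" "Vf SS C3 x = \<beta>"
    using IVT2'[of "Vf SS C3" x2 \<beta> x0] V_cont[OF x0p(1)] V0 assms x0p by auto
  have "x \<noteq> x2" using x assms by auto
  hence ex: "0 < x" "x < x2" using x x0p by auto
  show ?thesis
  proof (rule ex1I[of _ x])
    show "0 < x \<and> x < x2 \<and> Vf SS C3 x = \<beta>" using ex x by simp
    fix y assume y: "0 < y \<and> y < x2 \<and> Vf SS C3 y = \<beta>"
    show "y = x"
    proof (rule ccontr)
      assume "y \<noteq> x" hence "y < x \<or> x < y" by auto
      thus False
      proof
        assume "y < x" thus False using V_dec2[of y x] y ex x by simp
      next
        assume "x < y" thus False using V_dec2[of x y] y ex x by simp
      qed
    qed
  qed
qed

lemma c_ex: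
  assumes "Vf SS C3 x2 < \<beta>" "\<beta> < Vf SS C3 x1"
  shows "\<exists>!x. x2 < x \<and> x < x1 \<and> Vf SS C3 x = \<beta>"
proof -
  have x12: "x2 < x1" using x2_prop x1_prop by simp
  obtain x where x: "x2 \<le> x" "x \<le> x1" "Vf SS C3 x = \<beta>"
    using IVT'[of "Vf SS C3" x2 \<beta> x1] V_cont[OF x2_prop(1)] assms x12 by auto
  have "x \<noteq> x2" "x \<noteq> x1" using x assms by auto
  hence ex: "x2 < x" "x < x1" using x by auto
  show ?thesis
  proof (rule ex1I[of _ x])
    show "x2 < x \<and> x < x1 \<and> Vf SS C3 x = \<beta>" using ex x by simp
    fix y assume y: "x2 < y \<and> y < x1 \<and> Vf SS C3 y = \<beta>"
    show "y = x"
    proof (rule ccontr)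
      assume "y \<noteq> x" hence "y < x \<or> x < y" by auto
      thus False
      proof
        assume "y < x" thus False using V_inc2[of y x] y ex x by simp
      next
        assume "x < y" thus False using V_inc2[of x y] y ex x by simp
      qed
    qed
  qed
qed

definition "aB b = C1 - phiplus C1 C2 C3 b"
definition "cB b = C1 - phiminus C1 C2 C3 b"

lemma aB_prop:
  assumes "bminus C1 C2 C3 < b"
  shows "0 < aB b" "aB b < x2" "Vf SS C3 (aB b) = b - K0"
proof -
  have "Vf SS C3 x2 < b - K0" using assms bminus_eq by simp
  from a_ex[OF this] obtain x where x: "0 < x" "x < x2" "Vf SS C3 x = b - K0"
    and uniq: "\<And>y. 0 < y \<and> y < x2 \<and> Vf SS C3 y = b - K0 \<Longrightarrow> y = x" by blast
  have p2: "phi2 C1 C2 C3 = C1 - x2" unfolding x2_def by simp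
  have "phiplus C1 C2 C3 b = C1 - x" unfolding phiplus_def
  proof (rule the_equality)
    show "phi2 C1 C2 C3 < C1 - x \<and> C1 - x < C1 \<and> Upot C1 C2 C3 (C1 - x) = b"
      using x unfolding p2 Upot_V by simp
  next
    fix p assume p: "phi2 C1 C2 C3 < p \<and> p < C1 \<and> Upot C1 C2 C3 p = b"
    have "0 < C1 - p" "C1 - p < x2" using p unfolding p2 by auto
    moreover have "Vf SS C3 (C1 - p) = b - K0" using p unfolding Upot_V by simp
    ultimately have "C1 - p = x" using uniq by simp
    thus "p = C1 - x" by simp
  qed
  hence "aB b = x" unfolding aB_def by simp
  thus "0 < aB b" "aB b < x2" "Vf SS C3 (aB b) = b - K0" using x by auto
qed

lemma cB_prop:
  assumes "bminus C1 C2 C3 < b" "b < bplus C1 C2 C3"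
  shows "x2 < cB b" "cB b < x1" "Vf SS C3 (cB b) = b - K0"
proof -
  have "Vf SS C3 x2 < b - K0" "b - K0 < Vf SS C3 x1" using assms bminus_eq bplus_eq by auto
  from c_ex[OF this] obtain x where x: "x2 < x" "x < x1" "Vf SS C3 x = b - K0"
    and uniq: "\<And>y. x2 < y \<and> y < x1 \<and> Vf SS C3 y = b - K0 \<Longrightarrow> y = x" by blast
  have p2: "phi2 C1 C2 C3 = C1 - x2" unfolding x2_def by simp
  have p1: "phi1 C1 C2 C3 = C1 - x1" unfolding x1_def by simp
  have "phiminus C1 C2 C3 b = C1 - x" unfolding phiminus_def
  proof (rule the_equality)
    show "phi1 C1 C2 C3 < C1 - x \<and> C1 - x < phi2 C1 C2 C3 \<and> Upot C1 C2 C3 (C1 - x) = b"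
      using x unfolding p2 p1 Upot_V by simp
  next
    fix p assume p: "phi1 C1 C2 C3 < p \<and> p < phi2 C1 C2 C3 \<and> Upot C1 C2 C3 p = b"
    have "x2 < C1 - p" "C1 - p < x1" using p unfolding p2 p1 by auto
    moreover have "Vf SS C3 (C1 - p) = b - K0" using p unfolding Upot_V by simp
    ultimately have "C1 - p = x" using uniq by simp
    thus "p = C1 - x" by simp
  qed
  hence "cB b = x" unfolding cB_def by simp
  thus "x2 < cB b" "cB b < x1" "Vf SS C3 (cB b) = b - K0" using x by auto
qed

lemma cB_mono:
  assumes "bminus C1 C2 C3 < b1" "b1 < b2" "b2 < bplus C1 C2 C3"
  shows "cB b1 < cB b2"
proof (rule ccontr)
  assume "\<not> cB b1 < cB b2"
  hence "cB b2 < cB b1 \<or> cB b2 = cB b1" by auto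
  moreover have "x2 < cB b1" "cB b1 < x1" "Vf SS C3 (cB b1) = b1 - K0" using cB_prop assms by auto
  moreover have "x2 < cB b2" "cB b2 < x1" "Vf SS C3 (cB b2) = b2 - K0" using cB_prop assms by auto
  ultimately show False using V_inc2[of "cB b2" "cB b1"] assms by auto
qed


lemma Fmeas: "(\<lambda>p. 1 / sqrt (2 * (b - Upot C1 C2 C3 p))) \<in> borel_measurable borel"
  unfolding Upot_def by measurable

lemma period_eq:
  assumes b: "bminus C1 C2 C3 < b" "b < bplus C1 C2 C3"
  shows "period C1 C2 C3 b = integral {0..pi/2} (\<lambda>t. 2 * Hf SS C3 ((sin t)^2) (cB b))"
proof -
  define a where "a = aB b"
  define c where "c = cB b"
  define d where "d = SS - a - c"
  have a: "0 < a" "a < x2" "Vf SS C3 a = b - K0" using aB_prop b unfolding a_def by auto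
  have c: "x2 < c" "c < x1" "Vf SS C3 c = b - K0" using cB_prop b unfolding c_def by auto
  have ac: "a < c" using a c by simp
  note fa = factor[OF a(1) ac a(3) c(3)]
  have acd: "a*c*d = C3" using fa(1) unfolding d_def .
  have cd: "c < d" unfolding d_def using d_gt_c[OF a(1) ac fa(1) fc_above[OF c(1,2)]] .
  have pm: "phiminus C1 C2 C3 b = C1 - c" unfolding c_def cB_def by simp
  have pp: "phiplus C1 C2 C3 b = C1 - a" unfolding a_def aB_def by simp
  define k where "k = (\<lambda>t. 2 * sqrt((c*(cos t)^2 + a*(sin t)^2)/(d - (c*(cos t)^2 + a*(sin t)^2))))"
  have int1: "((\<lambda>p. 1 / sqrt (2 * (b - Upot C1 C2 C3 p))) has_integral integral {0..pi/2} k) {C1-c..C1-a}"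
    unfolding k_def
  proof (rule period_subst[OF a(1) ac cd Fmeas])
    fix p assume p: "C1 - c \<le> p" "p \<le> C1 - a"
    have x0: "0 < C1 - p" using p a by simp
    have "2 * (b - Upot C1 C2 C3 p) = 2*((b - K0) - Vf SS C3 (C1 - p))" unfolding Upot_V by simp
    also have "\<dots> = ((C1-p)-a)*(c-(C1-p))*(d-(C1-p))/(C1-p)" using fa(3)[OF x0] unfolding d_def by simp
    finally show "1 / sqrt (2 * (b - Upot C1 C2 C3 p)) = 1/sqrt(((C1-p)-a)*(c-(C1-p))*(d-(C1-p))/(C1-p))" by simp
  qed
  have P: "period C1 C2 C3 b = 2 * integral {0..pi/2} k"
    unfolding period_def pm pp using integral_unique[OF int1] by simp
  have xb: "a \<le> c*(cos t)^2 + a*(sin t)^2" "c*(cos t)^2 + a*(sin t)^2 \<le> c" for t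
    using xth_bounds ac by auto
  have nz: "d - (c*(cos t)^2 + a*(sin t)^2) \<noteq> 0" for t using xb[of t] cd by auto
  have kc: "continuous_on {0..pi/2} k" unfolding k_def using nz by (intro continuous_intros) auto
  have kr: "continuous_on {0..pi/2} (\<lambda>t. k (pi/2 - t))" 
    by (rule continuous_on_compose2[OF kc]) (auto intro!: continuous_intros)
  have "2 * integral {0..pi/2} k = integral {0..pi/2} k + integral {0..pi/2} (\<lambda>t. k (pi/2 - t))"
    using reflect_int[OF kc] by simp
  also have "\<dots> = integral {0..pi/2} (\<lambda>t. k t + k (pi/2 - t))"
    using integrable_continuous_interval[OF kc] integrable_continuous_interval[OF kr]
    by (simp add: integral_add)
  also have "\<dots> = integral {0..pi/2} (\<lambda>t. 2 * Hf SS C3 ((sin t)^2) c)"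
  proof (rule integral_cong)
    fix t :: real
    have S: "SS = a + c + d" unfolding d_def by simp
    have aa: "aa SS C3 c = a" and dd: "dd SS C3 c = d"
      unfolding S using aa_id[OF a(1) ac cd acd] by auto
    have sc: "sin (pi/2 - t) = cos t" "cos (pi/2 - t) = sin t" by (simp_all add: sin_diff cos_diff)
    have u: "1 - (sin t)^2 = (cos t)^2" by (simp add: cos_squared_eq)
    show "k t + k (pi/2 - t) = 2 * Hf SS C3 ((sin t)^2) c"
      unfolding k_def Hf_def aa dd sc u by (simp add: algebra_simps)
  qed
  finally show ?thesis unfolding P c_def .
qed

lemma Hint_cont:
  assumes "0 < a" "a < c" "c < d"
  shows "continuous_on {0..pi/2} (\<lambda>t. 2 * (sqrt ((a*(1-(sin t)^2)+c*(sin t)^2)/(d - (a*(1-(sin t)^2)+c*(sin t)^2)))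
             + sqrt ((a*(sin t)^2+c*(1-(sin t)^2))/(d - (a*(sin t)^2+c*(1-(sin t)^2))))))"
proof -
  have u: "0 \<le> (sin t)^2" "(sin t)^2 \<le> 1" for t :: real
    using sin_cos_squared_add[of t] zero_le_power2[of "cos t"] zero_le_power2[of "sin t"] by linarith+
  have n1: "d - (a*(1-(sin t)^2)+c*(sin t)^2) \<noteq> 0" for t using psi_bounds[OF assms u[of t]] by simp
  have n2: "d - (a*(sin t)^2+c*(1-(sin t)^2)) \<noteq> 0" for t
    using psi_bounds[OF assms, of "1 - (sin t)^2"] u[of t] by (simp add: algebra_simps)
  show ?thesis using n1 n2 by (intro continuous_intros) auto
qed

lemma main: "strict_mono_on {bminus C1 C2 C3 <..< bplus C1 C2 C3} (period C1 C2 C3)"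
proof (rule strict_mono_onI)
  fix b1 b2 assume b1: "b1 \<in> {bminus C1 C2 C3 <..< bplus C1 C2 C3}"
    and b2: "b2 \<in> {bminus C1 C2 C3 <..< bplus C1 C2 C3}" and lt: "b1 < b2"
  define c1 where "c1 = cB b1"
  define c2 where "c2 = cB b2"
  have c12: "c1 < c2" unfolding c1_def c2_def using cB_mono b1 b2 lt by auto
  have c1p: "x2 < c1" "c1 < x1" using cB_prop b1 unfolding c1_def by auto
  have c2p: "x2 < c2" "c2 < x1" using cB_prop b2 unfolding c2_def by auto
  have vld: "C3 < c^2*(SS-2*c)" if "c1 \<le> c" "c \<le> c2" for c
    using fc_above[of c] c1p c2p that unfolding fc_def by simp
  have c10: "0 < c1" using c1p x2_prop by simp
  have cont: "continuous_on {0..pi/2} (\<lambda>t. 2 * Hf SS C3 ((sin t)^2) c)" if "c1 \<le> c" "c \<le> c2" for c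
  proof -
    have c0: "0 < c" using that c10 by simp
    have vv: "0 < aa SS C3 c" "aa SS C3 c < c" "c < dd SS C3 c" using valid[OF C30 c0 vld[OF that]] by auto
    show ?thesis unfolding Hf_def using Hint_cont[OF vv] by (simp add: algebra_simps)
  qed
  have "integral {0..pi/2} (\<lambda>t. 2 * Hf SS C3 ((sin t)^2) c1) < integral {0..pi/2} (\<lambda>t. 2 * Hf SS C3 ((sin t)^2) c2)"
  proof (rule integral_less_real)
    show "continuous_on {0..pi/2} (\<lambda>t. 2 * Hf SS C3 ((sin t)^2) c1)" using cont c12 by simp
    show "continuous_on {0..pi/2} (\<lambda>t. 2 * Hf SS C3 ((sin t)^2) c2)" using cont c12 by simp
    have "0 < pi/2" by simp
    thus "{0<..<pi/2} \<noteq> {}" by (metis greaterThanLessThan_iff dense empty_iff)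
    fix t :: real
    have "Hf SS C3 ((sin t)^2) c1 < Hf SS C3 ((sin t)^2) c2"
      using H_mono[OF C30 c10 c12 vld, of "(sin t)^2"] sin_cos_squared_add[of t] zero_le_power2[of "cos t"] by simp
    thus "2 * Hf SS C3 ((sin t)^2) c1 < 2 * Hf SS C3 ((sin t)^2) c2" by simp
  qed
  thus "period C1 C2 C3 b1 < period C1 C2 C3 b2"
    using period_eq b1 b2 unfolding c1_def c2_def by auto
qed

end

theorem theorem2:
  fixes C1 C2 C3 :: real
  assumes "2*C1 + C2 > 0"
    and "0 < C3" and "C3 < C3crit C1 C2"
  shows "strict_mono_on {bminus C1 C2 C3 <..< bplus C1 C2 C3} (period C1 C2 C3)"
  using main[OF assms] .


end
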